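(* Let $\mathbb{K}\in\{\mathbb{R},\mathbb{C}\}$, $d\ge4$, let $g\in\mathsf{GL}_d(\mathbb{K})$ satisfy $\sigma_d(g)=\sigma_1(g)^{-1}$, and let $0<\epsilon<\frac{2}{d-1}$. Then there exists $k\in\{1,\dots,d-1\}$ such that $\sigma_k(g)\ge\sigma_1(g)^{1-d\epsilon}$ and $\frac{\sigma_k}{\sigma_{k+1}}(g)\ge\sigma_1(g)^{\epsilon}$.
   Context: $\sigma_1(g)\ge\dots\ge\sigma_d(g)$ are the singular values of $g$ and $\frac{\sigma_i}{\sigma_j}(g)=\sigma_i(g)/\sigma_j(g)$. *)

theory Defs
  imports "Jordan_Normal_Form.Schur_Decomposition" "HOL-Computational_Algebra.Fundamental_Theorem_Algebra"
begin

definition singular_values :: "complex mat \<Rightarrow> real list" where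
  "singular_values g = rev (sorted_list_of_multiset
     (image_mset (\<lambda>z. sqrt (Re z)) (proots (char_poly (mat_adjoint g * g)))))"

(* sigma g i = \<sigma>_i(g), 1-based index, for i \<in> {1..d} *)
definition sigma :: "complex mat \<Rightarrow> nat \<Rightarrow> real" where
  "sigma g i = singular_values g ! (i - 1)"

(* Real matrices: singular values are those of the matrix viewed over \<complex>
   (g^T g and its complexification have the same characteristic polynomial). *)
definition sigma_real :: "real mat \<Rightarrow> nat \<Rightarrow> real" where
  "sigma_real g i = sigma (map_mat complex_of_real g) i"

end

theory Submission
  imports Defs
begin



lemma adj_carrier: "A \<in> carrier_mat n n \<Longrightarrow> mat_adjoint A \<in> carrier_mat n n"
  unfolding mat_adjoint_def carrier_mat_def by simp

lemma adj_entry: "A \<in> carrier_mat n n \<Longrightarrow> i < n \<Longrightarrow> j < n \<Longrightarrow> mat_adjoint A $$ (i,j) = cnj (A $$ (j,i))"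
  unfolding mat_adjoint_def mat_of_rows_def carrier_mat_def by simp

lemma cprod_sum: "w \<in> carrier_vec n \<Longrightarrow> (u::complex vec) \<bullet>c w = (\<Sum>i\<in>{0..<n}. u $ i * cnj (w $ i))"
proof -
  assume w: "w \<in> carrier_vec n"
  hence d: "dim_vec w = n" by simp
  show ?thesis unfolding scalar_prod_def dim_vec_conjugate d
    by (rule sum.cong[OF refl]) (simp add: conjugate_vec_def d)
qed

lemma mv_idx: "A \<in> carrier_mat n m \<Longrightarrow> v \<in> carrier_vec m \<Longrightarrow> i < n \<Longrightarrow>
   (A *\<^sub>v v) $ i = (\<Sum>j\<in>{0..<m}. A $$ (i,j) * v $ j)"
  unfolding carrier_mat_def carrier_vec_def by (simp add: scalar_prod_def)

lemma adj_ident: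
  fixes A :: "complex mat"
  assumes A: "A \<in> carrier_mat n n" and v: "v \<in> carrier_vec n" and w: "w \<in> carrier_vec n"
  shows "(mat_adjoint A *\<^sub>v w) \<bullet>c v = cnj ((A *\<^sub>v v) \<bullet>c w)"
proof -
  have "(mat_adjoint A *\<^sub>v w) \<bullet>c v = (\<Sum>i\<in>{0..<n}. (mat_adjoint A *\<^sub>v w) $ i * cnj (v $ i))"
    using v by (rule cprod_sum)
  also have "\<dots> = (\<Sum>i\<in>{0..<n}. (\<Sum>j\<in>{0..<n}. cnj (A $$ (j,i)) * w $ j) * cnj (v $ i))"
  proof (rule sum.cong[OF refl])
    fix i assume "i \<in> {0..<n}"
    hence i: "i < n" by simp
    have "(mat_adjoint A *\<^sub>v w) $ i = (\<Sum>j\<in>{0..<n}. mat_adjoint A $$ (i,j) * w $ j)"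
      by (rule mv_idx[OF adj_carrier[OF A] w i])
    also have "\<dots> = (\<Sum>j\<in>{0..<n}. cnj (A $$ (j,i)) * w $ j)"
      by (rule sum.cong[OF refl]) (simp only: adj_entry[OF A] i atLeastLessThan_iff)
    finally show "(mat_adjoint A *\<^sub>v w) $ i * cnj (v $ i) = (\<Sum>j\<in>{0..<n}. cnj (A $$ (j,i)) * w $ j) * cnj (v $ i)" by simp
  qed
  also have "\<dots> = (\<Sum>j\<in>{0..<n}. \<Sum>i\<in>{0..<n}. cnj (A $$ (j,i)) * cnj (v $ i) * w $ j)"
    by (subst sum.swap) (simp add: sum_distrib_right sum_distrib_left mult_ac)
  also have "\<dots> = cnj (\<Sum>j\<in>{0..<n}. (\<Sum>i\<in>{0..<n}. A $$ (j,i) * v $ i) * cnj (w $ j))"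
    by (simp add: sum_distrib_right sum_distrib_left mult_ac)
  also have "\<dots> = cnj ((A *\<^sub>v v) \<bullet>c w)"
    by (subst cprod_sum[OF w], rule arg_cong[where f=cnj], rule sum.cong[OF refl], subst mv_idx[OF A v], auto)
  finally show ?thesis .
qed

lemma eig_nonneg:
  fixes A :: "complex mat"
  assumes A: "A \<in> carrier_mat n n" and z: "poly (char_poly (mat_adjoint A * A)) z = 0"
  shows "Re z \<ge> 0"
proof -
  have B: "mat_adjoint A * A \<in> carrier_mat n n" using A adj_carrier[OF A] by auto
  have "eigenvalue (mat_adjoint A * A) z" using eigenvalue_root_char_poly[OF B] z by simp
  then obtain v where ev: "eigenvector (mat_adjoint A * A) v z" unfolding eigenvalue_def by auto
  hence v: "v \<in> carrier_vec n" and v0: "v \<noteq> 0\<^sub>v n" and eq: "(mat_adjoint A * A) *\<^sub>v v = z \<cdot>\<^sub>v v"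
    using B by (auto simp: eigenvector_def)
  have Av: "A *\<^sub>v v \<in> carrier_vec n" using A v by auto
  have "z * (v \<bullet>c v) = ((mat_adjoint A * A) *\<^sub>v v) \<bullet>c v" using eq v by simp
  also have "\<dots> = (mat_adjoint A *\<^sub>v (A *\<^sub>v v)) \<bullet>c v" using A v adj_carrier[OF A] by (subst assoc_mult_mat_vec[of _ n n _ n]) auto
  also have "\<dots> = cnj ((A *\<^sub>v v) \<bullet>c (A *\<^sub>v v))" using adj_ident[OF A v Av] .
  finally have e: "z * (v \<bullet>c v) = cnj ((A *\<^sub>v v) \<bullet>c (A *\<^sub>v v))" .
  have p: "v \<bullet>c v > 0" using v v0 by simp
  have q: "(A *\<^sub>v v) \<bullet>c (A *\<^sub>v v) \<ge> 0" by (rule conjugate_square_ge_0_vec)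
  have "Im (v \<bullet>c v) = 0" "Re (v \<bullet>c v) > 0" using p by (auto simp: less_complex_def)
  moreover have "Im ((A *\<^sub>v v) \<bullet>c (A *\<^sub>v v)) = 0" "Re ((A *\<^sub>v v) \<bullet>c (A *\<^sub>v v)) \<ge> 0" using q by (auto simp: less_eq_complex_def)
  ultimately have "Re z * Re (v \<bullet>c v) \<ge> 0" "Re (v \<bullet>c v) > 0" using arg_cong[OF e, of Re] arg_cong[OF e, of Im]
    by simp_all
  thus ?thesis by (simp add: zero_le_mult_iff)
qed



lemma core:
  fixes s :: "nat \<Rightarrow> real" and d :: nat and \<epsilon> :: real
  assumes d2: "d \<ge> 2" and ep: "0 < \<epsilon>" and epd: "(real d - 1) * \<epsilon> < 2"
    and mono: "\<And>i j. 1 \<le> i \<Longrightarrow> i \<le> j \<Longrightarrow> j \<le> d \<Longrightarrow> s j \<le> s i"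
    and nn: "\<And>i. 1 \<le> i \<Longrightarrow> i \<le> d \<Longrightarrow> s i \<ge> 0"
    and sd: "s d = 1 / s 1"
  shows "\<exists>k\<in>{1..d-1}. s k \<ge> s 1 powr (1 - real d * \<epsilon>) \<and> s k / s (k+1) \<ge> s 1 powr \<epsilon>"
proof (cases "s 1 = 0")
  case True
  have "1 \<in> {1..d-1}" using d2 by auto
  moreover have "s 1 \<ge> s 1 powr (1 - real d * \<epsilon>) \<and> s 1 / s (1+1) \<ge> s 1 powr \<epsilon>" using True by simp
  ultimately show ?thesis by blast
next
  case False
  define \<sigma> where "\<sigma> = s 1"
  have s1: "\<sigma> > 0" using False nn[of 1] d2 unfolding \<sigma>_def by force
  have sdp: "s d > 0" using sd s1 unfolding \<sigma>_def by simp
  have sig1: "\<sigma> \<ge> 1"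
  proof (rule ccontr)
    assume "\<not> \<sigma> \<ge> 1"
    hence "\<sigma> * \<sigma> < 1 * 1" using s1 by (intro mult_strict_mono) auto
    hence "1 / \<sigma> > \<sigma>" using s1 by (simp add: field_simps)
    moreover have "s d \<le> s 1" using mono[of 1 d] d2 by simp
    ultimately show False using sd unfolding \<sigma>_def by simp
  qed
  have pos: "\<And>i. 1 \<le> i \<Longrightarrow> i \<le> d \<Longrightarrow> s i > 0" using mono sdp by (meson order_less_le_trans order_refl)
  show ?thesis
  proof (rule ccontr)
    assume H: "\<not> ?thesis"
    have step: "s (k+1) > \<sigma> powr (1 - real k * \<epsilon>)"
      if k1: "1 \<le> k" and kd: "k \<le> d - 1" and P: "s k \<ge> \<sigma> powr (1 - (real k - 1) * \<epsilon>)" for k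
    proof -
      have "\<sigma> powr (1 - real d * \<epsilon>) \<le> \<sigma> powr (1 - (real k - 1) * \<epsilon>)"
      proof -
        have "real k - 1 \<le> real d" using kd by linarith
        hence "(real k - 1) * \<epsilon> \<le> real d * \<epsilon>" using ep by (intro mult_right_mono) auto
        thus ?thesis using sig1 by (intro powr_mono) auto
      qed
      hence c1: "s k \<ge> s 1 powr (1 - real d * \<epsilon>)" using P unfolding \<sigma>_def by linarith
      have kin: "k \<in> {1..d-1}" using k1 kd by auto
      have "\<not> (s k / s (k+1) \<ge> s 1 powr \<epsilon>)" using H c1 kin by blast
      hence lt: "s k / s (k+1) < \<sigma> powr \<epsilon>" unfolding \<sigma>_def by simp
      have pk1: "s (k+1) > 0" using pos[of "k+1"] kd d2 by simp
      have pe: "\<sigma> powr \<epsilon> > 0" using s1 by simp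
      have "s k < \<sigma> powr \<epsilon> * s (k+1)" using lt pk1 by (simp add: divide_less_eq)
      hence "s k / \<sigma> powr \<epsilon> < s (k+1)" using pe by (simp add: divide_less_eq mult.commute)
      moreover have "\<sigma> powr (1 - real k * \<epsilon>) = \<sigma> powr (1 - (real k - 1) * \<epsilon>) / \<sigma> powr \<epsilon>"
        by (subst powr_diff[symmetric]) (simp add: algebra_simps)
      moreover have "\<sigma> powr (1 - (real k - 1) * \<epsilon>) / \<sigma> powr \<epsilon> \<le> s k / \<sigma> powr \<epsilon>"
        using P pe by (simp add: divide_right_mono)
      ultimately show ?thesis by linarith
    qed
    have ind: "k + 1 \<le> d \<Longrightarrow> s (k+1) \<ge> \<sigma> powr (1 - real k * \<epsilon>)" for k
    proof (induction k)
      case 0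
      then show ?case using s1 unfolding \<sigma>_def by simp
    next
      case (Suc k)
      hence "s (k+1) \<ge> \<sigma> powr (1 - real k * \<epsilon>)" by simp
      hence "s (k+1+1) > \<sigma> powr (1 - real (k+1) * \<epsilon>)"
        using step[of "k+1"] Suc.prems by simp
      thus ?case by simp
    qed
    have "s (d-2+1) \<ge> \<sigma> powr (1 - real (d-2) * \<epsilon>)" using ind[of "d-2"] d2 by simp
    moreover have "d-2+1 = d-1" "real (d-1) - 1 = real (d-2)" "1 \<le> d - 1" using d2 by auto
    ultimately have "s (d-1+1) > \<sigma> powr (1 - real (d-1) * \<epsilon>)"
      using step[of "d-1"] by simp
    hence "s d > \<sigma> powr (1 - real (d-1) * \<epsilon>)" using d2 by simp
    moreover have "\<sigma> powr (-1) \<le> \<sigma> powr (1 - real (d-1) * \<epsilon>)"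
      using sig1 epd d2 by (intro powr_mono) (auto simp: of_nat_diff)
    moreover have "\<sigma> powr (-1) = 1 / \<sigma>" using s1 by (simp add: powr_minus divide_inverse)
    ultimately show False using sd unfolding \<sigma>_def by simp
  qed
qed



lemma sv_props:
  assumes g: "g \<in> carrier_mat n n"
  shows "length (singular_values g) = n"
    and "\<And>i j. i \<le> j \<Longrightarrow> j < n \<Longrightarrow> singular_values g ! j \<le> singular_values g ! i"
    and "\<And>x. x \<in> set (singular_values g) \<Longrightarrow> x \<ge> 0"
proof -
  define B where "B = mat_adjoint g * g"
  have B: "B \<in> carrier_mat n n" unfolding B_def using g adj_carrier[OF g] by auto
  have deg: "degree (char_poly B) = n" and cf: "coeff (char_poly B) n = 1"
    using degree_monic_char_poly[OF B] by auto
  have p0: "char_poly B \<noteq> 0" using cf by auto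
  define M where "M = image_mset (\<lambda>z. sqrt (Re z)) (proots (char_poly B))"
  define L where "L = sorted_list_of_multiset M"
  have sv: "singular_values g = rev L" unfolding singular_values_def L_def M_def B_def ..
  have "length L = size (mset L)" by simp
  also have "\<dots> = size M" unfolding L_def by simp
  also have "\<dots> = n" unfolding M_def by (simp add: size_proots_complex deg)
  finally have lenL: "length L = n" .
  show "length (singular_values g) = n" using sv lenL by simp
  have sL: "sorted L" unfolding L_def by simp
  show "singular_values g ! j \<le> singular_values g ! i" if "i \<le> j" "j < n" for i j
    using that sv lenL by (simp add: rev_nth) (rule sorted_nth_mono[OF sL], auto)
  show "x \<ge> 0" if "x \<in> set (singular_values g)" for x
  proof -
    have "x \<in># M" using that sv unfolding L_def by simp
    then obtain z where z: "z \<in># proots (char_poly B)" and x: "x = sqrt (Re z)" unfolding M_def by auto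
    have "poly (char_poly B) z = 0" using z p0 by simp
    hence "Re z \<ge> 0" using eig_nonneg[OF g] unfolding B_def by blast
    thus ?thesis using x by simp
  qed
qed

lemma sigma_props:
  assumes g: "g \<in> carrier_mat d d"
  shows "\<And>i j. 1 \<le> i \<Longrightarrow> i \<le> j \<Longrightarrow> j \<le> d \<Longrightarrow> sigma g j \<le> sigma g i"
    and "\<And>i. 1 \<le> i \<Longrightarrow> i \<le> d \<Longrightarrow> sigma g i \<ge> 0"
proof -
  show "sigma g j \<le> sigma g i" if "1 \<le> i" "i \<le> j" "j \<le> d" for i j
    unfolding sigma_def using that sv_props(2)[OF g, of "i-1" "j-1"] by simp
  show "sigma g i \<ge> 0" if "1 \<le> i" "i \<le> d" for i
    unfolding sigma_def using that sv_props(1,3)[OF g] nth_mem[of "i-1" "singular_values g"] by simp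
qed

lemma cplx_case:
  fixes d :: nat and \<epsilon> :: real and g :: "complex mat"
  assumes "d \<ge> 4" and "0 < \<epsilon>" and "\<epsilon> < 2 / (real d - 1)" and g: "g \<in> carrier_mat d d"
    and sd: "sigma g d = 1 / sigma g 1"
  shows "\<exists>k\<in>{1..d-1}. sigma g k \<ge> sigma g 1 powr (1 - real d * \<epsilon>) \<and>
                           sigma g k / sigma g (k+1) \<ge> sigma g 1 powr \<epsilon>"
proof (rule core)
  show "d \<ge> 2" using assms by simp
  show "0 < \<epsilon>" by fact
  have "real d - 1 > 0" using assms by simp
  thus "(real d - 1) * \<epsilon> < 2" using assms(3) by (simp add: less_divide_eq mult.commute)
qed (use sigma_props[OF g] sd in auto)

theorem lemma4p3:
  fixes d :: nat and \<epsilon> :: real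
  assumes "d \<ge> 4" and "0 < \<epsilon>" and "\<epsilon> < 2 / (real d - 1)"
  shows "(\<forall>g :: real mat. g \<in> carrier_mat d d \<longrightarrow> det g \<noteq> 0 \<longrightarrow>
            sigma_real g d = 1 / sigma_real g 1 \<longrightarrow>
            (\<exists>k\<in>{1..d-1}. sigma_real g k \<ge> sigma_real g 1 powr (1 - real d * \<epsilon>) \<and>
                           sigma_real g k / sigma_real g (k+1) \<ge> sigma_real g 1 powr \<epsilon>))
       \<and> (\<forall>g :: complex mat. g \<in> carrier_mat d d \<longrightarrow> det g \<noteq> 0 \<longrightarrow>
            sigma g d = 1 / sigma g 1 \<longrightarrow>
            (\<exists>k\<in>{1..d-1}. sigma g k \<ge> sigma g 1 powr (1 - real d * \<epsilon>) \<and>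
                           sigma g k / sigma g (k+1) \<ge> sigma g 1 powr \<epsilon>))"
proof (intro conjI allI impI)
  fix g :: "real mat"
  assume g: "g \<in> carrier_mat d d" and "sigma_real g d = 1 / sigma_real g 1"
  moreover have "map_mat complex_of_real g \<in> carrier_mat d d" using g by simp
  ultimately show "\<exists>k\<in>{1..d-1}. sigma_real g k \<ge> sigma_real g 1 powr (1 - real d * \<epsilon>) \<and>
                           sigma_real g k / sigma_real g (k+1) \<ge> sigma_real g 1 powr \<epsilon>"
    unfolding sigma_real_def using cplx_case[OF assms] by blast
next
  fix g :: "complex mat"
  assume "g \<in> carrier_mat d d" and "sigma g d = 1 / sigma g 1"
  thus "\<exists>k\<in>{1..d-1}. sigma g k \<ge> sigma g 1 powr (1 - real d * \<epsilon>) \<and>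
                           sigma g k / sigma g (k+1) \<ge> sigma g 1 powr \<epsilon>"
    using cplx_case[OF assms] by blast
qed

end
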